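(* Let $m>a\geq0$, $n>b\geq0$, $h\geq0$ be integers with $h\leq (m-a)(n-b)-\max\{m-a,n-b\}$, and let $N=mn$. For any $\mathcal{E}'\in\mathbb{E}^{\max}_{m\times n}(a,b,0)$ and any $[N,k]$ code $\mathcal{C}\in\mathbb{C}^{\mathsf{MR}}_{m\times n}(a,b,h)$, the code $\mathcal{C}|_{([m]\times[n])\setminus\mathcal{E}'}$ (obtained by restricting every codeword to the positions outside $\mathcal{E}'$) is an $[N-|\mathcal{E}'|,k,h+1]$ MDS code.
   Context: Positions of vectors in $\mathbb{F}^{mn}$ are identified with the grid $[m]\times[n]$, where $[k]=\{1,\dots,k\}$. For linear codes $\mathcal{C}_1\subseteq\mathbb{F}^m$, $\mathcal{C}_2\subseteq\mathbb{F}^n$ with generator matrices $\mathbf{G}_1,\mathbf{G}_2$, $\mathcal{C}_1\otimes\mathcal{C}_2$ is the row span of $\mathbf{G}_1\otimes\mathbf{G}_2$. A code for the topology $T_{m\times n}(a,b,h)$ is a linear code over a finite field $\mathbb{F}$ with a parity-check matrix $\begin{pmatrix}\mathbf{H}_{\mathsf{local}}\\ \mathbf{H}_{\mathsf{global}}\end{pmatrix}$, where $\mathbf{H}_{\mathsf{local}}$ is a parity-check matrix of $\mathcal{C}_{\mathsf{col}}\otimes\mathcal{C}_{\mathsf{row}}$ for some linear $[m,\geq m-a]$ code $\mathcal{C}_{\mathsf{col}}$ and $[n,\geq n-b]$ code $\mathcal{C}_{\mathsf{row}}$ over $\mathbb{F}$, and $\mathbf{H}_{\mathsf{global}}$ is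 an arbitrary $h\times mn$ matrix; $\mathbb{C}_{m\times n}(a,b,h)$ is the set of all such codes (over any finite field). A code corrects an erasure pattern $\mathcal{E}\subseteq[m]\times[n]$ if no two distinct codewords agree on all positions outside $\mathcal{E}$. $\mathcal{E}$ is correctable in $T_{m\times n}(a,b,h)$ if some code in $\mathbb{C}_{m\times n}(a,b,h)$ corrects it; $\mathbb{E}_{m\times n}(a,b,h)$ is the set of such patterns, $\mathbb{E}^{\max}_{m\times n}(a,b,h)$ the set of those not properly contained in another correctable pattern. A code in $\mathbb{C}_{m\times n}(a,b,h)$ is maximally recoverable (MR) if it corrects every pattern in $\mathbb{E}_{m\times n}(a,b,h)$; $\mathbb{C}^{\mathsf{MR}}_{m\times n}(a,b,h)$ is the set of MR codes. *)

theory Defs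
  imports "HOL-Algebra.Ring" "HOL-Algebra.Ring_Divisibility"
begin

definition grid :: "nat \<Rightarrow> nat \<Rightarrow> (nat \<times> nat) set" where
  "grid m n = {1..m} \<times> {1..n}"

definition vecs :: "('b, 'm) ring_scheme \<Rightarrow> 'p set \<Rightarrow> ('p \<Rightarrow> 'b) set" where
  "vecs R P = {v. (\<forall>p\<in>P. v p \<in> carrier R) \<and> (\<forall>p. p \<notin> P \<longrightarrow> v p = \<zero>\<^bsub>R\<^esub>)}"

definition lin_code :: "('b, 'm) ring_scheme \<Rightarrow> 'p set \<Rightarrow> ('p \<Rightarrow> 'b) set \<Rightarrow> bool" where
  "lin_code R P C \<longleftrightarrow> C \<subseteq> vecs R P \<and> (\<lambda>p. \<zero>\<^bsub>R\<^esub>) \<in> C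
     \<and> (\<forall>x\<in>C. \<forall>y\<in>C. (\<lambda>p. x p \<oplus>\<^bsub>R\<^esub> y p) \<in> C)
     \<and> (\<forall>c\<in>carrier R. \<forall>x\<in>C. (\<lambda>p. c \<otimes>\<^bsub>R\<^esub> x p) \<in> C)"

text \<open>Dimension over a finite field F_q: a k-dimensional code has q^k codewords.\<close>
definition has_dim :: "('b, 'm) ring_scheme \<Rightarrow> ('p \<Rightarrow> 'b) set \<Rightarrow> nat \<Rightarrow> bool" where
  "has_dim R C k \<longleftrightarrow> card C = card (carrier R) ^ k"

inductive_set lin_span :: "('b, 'm) ring_scheme \<Rightarrow> ('p \<Rightarrow> 'b) set \<Rightarrow> ('p \<Rightarrow> 'b) set"
  for R S where
  zero: "(\<lambda>p. \<zero>\<^bsub>R\<^esub>) \<in> lin_span R S"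
| step: "v \<in> lin_span R S \<Longrightarrow> s \<in> S \<Longrightarrow> c \<in> carrier R \<Longrightarrow>
          (\<lambda>p. (c \<otimes>\<^bsub>R\<^esub> s p) \<oplus>\<^bsub>R\<^esub> v p) \<in> lin_span R S"

text \<open>Tensor product code C1 (x) C2: span of all outer products x y^T
  (= row span of G1 (x) G2 for generator matrices G1, G2).\<close>
definition tensor_code :: "('b, 'm) ring_scheme \<Rightarrow> (nat \<Rightarrow> 'b) set \<Rightarrow> (nat \<Rightarrow> 'b) set
    \<Rightarrow> (nat \<times> nat \<Rightarrow> 'b) set" where
  "tensor_code R C1 C2 = lin_span R {(\<lambda>(i, j). x i \<otimes>\<^bsub>R\<^esub> y j) | x y. x \<in> C1 \<and> y \<in> C2}"

text \<open>Codes for the topology T_{m x n}(a,b,h): kernel of [H_local; H_global], where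
  ker H_local = Ccol (x) Crow and H_global is an arbitrary h x mn matrix.\<close>
definition topo_code :: "('b, 'm) ring_scheme \<Rightarrow> nat \<Rightarrow> nat \<Rightarrow> nat \<Rightarrow> nat \<Rightarrow> nat
    \<Rightarrow> (nat \<times> nat \<Rightarrow> 'b) set \<Rightarrow> bool" where
  "topo_code R m n a b h C \<longleftrightarrow>
    (\<exists>Ccol Crow H.
       lin_code R {1..m} Ccol \<and> (\<exists>k. k \<ge> m - a \<and> has_dim R Ccol k) \<and>
       lin_code R {1..n} Crow \<and> (\<exists>k. k \<ge> n - b \<and> has_dim R Crow k) \<and>
       (\<forall>i<h. \<forall>p\<in>grid m n. H i p \<in> carrier R) \<and>
       C = {c \<in> tensor_code R Ccol Crow.
              \<forall>i<h. (\<Oplus>\<^bsub>R\<^esub>p\<in>grid m n. H i p \<otimes>\<^bsub>R\<^esub> c p) = \<zero>\<^bsub>R\<^esub>})"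

definition corrects :: "nat \<Rightarrow> nat \<Rightarrow> (nat \<times> nat \<Rightarrow> 'b) set \<Rightarrow> (nat \<times> nat) set \<Rightarrow> bool" where
  "corrects m n C E \<longleftrightarrow>
     (\<forall>c1\<in>C. \<forall>c2\<in>C. (\<forall>p\<in>grid m n - E. c1 p = c2 p) \<longrightarrow> c1 = c2)"

text \<open>Correctable in T_{m x n}(a,b,h): some code over some finite field corrects E.
  Every finite field is isomorphic to one whose carrier is a set of naturals.\<close>
definition correctable :: "nat \<Rightarrow> nat \<Rightarrow> nat \<Rightarrow> nat \<Rightarrow> nat \<Rightarrow> (nat \<times> nat) set \<Rightarrow> bool" where
  "correctable m n a b h E \<longleftrightarrow> E \<subseteq> grid m n \<and>
     (\<exists>(F :: nat ring) C. field F \<and> finite (carrier F) \<and> topo_code F m n a b h C \<and> corrects m n C E)"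

definition correctable_max :: "nat \<Rightarrow> nat \<Rightarrow> nat \<Rightarrow> nat \<Rightarrow> nat \<Rightarrow> (nat \<times> nat) set \<Rightarrow> bool" where
  "correctable_max m n a b h E \<longleftrightarrow> correctable m n a b h E \<and>
     \<not> (\<exists>E2. E \<subset> E2 \<and> correctable m n a b h E2)"

definition MR_code :: "('b, 'm) ring_scheme \<Rightarrow> nat \<Rightarrow> nat \<Rightarrow> nat \<Rightarrow> nat \<Rightarrow> nat
    \<Rightarrow> (nat \<times> nat \<Rightarrow> 'b) set \<Rightarrow> bool" where
  "MR_code R m n a b h C \<longleftrightarrow> topo_code R m n a b h C \<and>
     (\<forall>E. correctable m n a b h E \<longrightarrow> corrects m n C E)"

definition restrict_code :: "('b, 'm) ring_scheme \<Rightarrow> 'p set \<Rightarrow> ('p \<Rightarrow> 'b) set \<Rightarrow> ('p \<Rightarrow> 'b) set" where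
  "restrict_code R S C = (\<lambda>c. (\<lambda>p. if p \<in> S then c p else \<zero>\<^bsub>R\<^esub>)) ` C"

definition weight :: "('b, 'm) ring_scheme \<Rightarrow> 'p set \<Rightarrow> ('p \<Rightarrow> 'b) \<Rightarrow> nat" where
  "weight R S c = card {p \<in> S. c p \<noteq> \<zero>\<^bsub>R\<^esub>}"

definition min_dist_is :: "('b, 'm) ring_scheme \<Rightarrow> 'p set \<Rightarrow> ('p \<Rightarrow> 'b) set \<Rightarrow> nat \<Rightarrow> bool" where
  "min_dist_is R S C d \<longleftrightarrow>
     (\<forall>c\<in>C. c \<noteq> (\<lambda>p. \<zero>\<^bsub>R\<^esub>) \<longrightarrow> weight R S c \<ge> d) \<and>
     (\<exists>c\<in>C. c \<noteq> (\<lambda>p. \<zero>\<^bsub>R\<^esub>) \<and> weight R S c = d)"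

definition MDS_code :: "('b, 'm) ring_scheme \<Rightarrow> 'p set \<Rightarrow> ('p \<Rightarrow> 'b) set \<Rightarrow> nat \<Rightarrow> nat \<Rightarrow> nat \<Rightarrow> bool" where
  "MDS_code R S C len k d \<longleftrightarrow> lin_code R S C \<and> finite S \<and> card S = len \<and> has_dim R C k \<and>
     min_dist_is R S C d \<and> k \<le> len \<and> d = len - k + 1"

end

theory Submission
  imports Defs "HOL-Library.FuncSet"
begin


definition injP :: "('p \<Rightarrow> 'b) set \<Rightarrow> 'p set \<Rightarrow> bool" where
  "injP C P \<longleftrightarrow> (\<forall>c1\<in>C. \<forall>c2\<in>C. (\<forall>p\<in>P. c1 p = c2 p) \<longrightarrow> c1 = c2)"

definition rz :: "('b, 'm) ring_scheme \<Rightarrow> 'p set \<Rightarrow> ('p \<Rightarrow> 'b) \<Rightarrow> ('p \<Rightarrow> 'b)" where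
  "rz R P c = (\<lambda>p. if p \<in> P then c p else \<zero>\<^bsub>R\<^esub>)"

lemma vecs_eq_image:
  "vecs R P = (\<lambda>f. rz R P f) ` (PiE P (\<lambda>_. carrier R))"
proof
  show "vecs R P \<subseteq> rz R P ` (P \<rightarrow>\<^sub>E carrier R)"
  proof
    fix v assume v: "v \<in> vecs R P"
    have "v = rz R P (restrict v P)" using v unfolding vecs_def rz_def by auto
    moreover have "restrict v P \<in> P \<rightarrow>\<^sub>E carrier R" using v unfolding vecs_def by auto
    ultimately show "v \<in> rz R P ` (P \<rightarrow>\<^sub>E carrier R)" by blast
  qed
  show "rz R P ` (P \<rightarrow>\<^sub>E carrier R) \<subseteq> vecs R P"
    unfolding vecs_def rz_def by auto
qed

lemma rz_inj: "inj_on (rz R P) (PiE P (\<lambda>_. carrier R))"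
proof (rule inj_onI)
  fix f g assume f: "f \<in> PiE P (\<lambda>_. carrier R)" and g: "g \<in> PiE P (\<lambda>_. carrier R)"
    and e: "rz R P f = rz R P g"
  show "f = g"
  proof (rule PiE_ext[OF f g])
    fix x assume "x \<in> P" then show "f x = g x" using fun_cong[OF e, of x] unfolding rz_def by auto
  qed
qed

lemma card_vecs:
  assumes "finite P" "finite (carrier R)"
  shows "card (vecs R P) = card (carrier R) ^ card P" "finite (vecs R P)"
proof -
  have "card (vecs R P) = card (PiE P (\<lambda>_. carrier R))"
    unfolding vecs_eq_image by (rule card_image[OF rz_inj])
  also have "\<dots> = card (carrier R) ^ card P" using assms by (simp add: card_PiE)
  finally show "card (vecs R P) = card (carrier R) ^ card P" .
  show "finite (vecs R P)" unfolding vecs_eq_image using assms by (simp add: finite_PiE)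
qed

lemma card_le_injP:
  fixes R :: "('b, 'm) ring_scheme"
  assumes "finite P" "finite (carrier R)" "injP C P" "\<And>c p. c \<in> C \<Longrightarrow> c p \<in> carrier R"
  shows "card C \<le> card (carrier R) ^ card P" "finite C"
proof -
  have inj: "inj_on (rz R P) C"
  proof (rule inj_onI)
    fix x y assume "x \<in> C" "y \<in> C" "rz R P x = rz R P y"
    then show "x = y" using assms(3) unfolding injP_def rz_def by (metis (full_types))
  qed
  have sub: "rz R P ` C \<subseteq> vecs R P" using assms(4) unfolding vecs_def rz_def by auto
  have "finite (rz R P ` C)" using sub card_vecs[OF assms(1,2)] finite_subset by blast
  then show "finite C" using inj finite_image_iff by blast
  have "card C = card (rz R P ` C)" using card_image[OF inj] by simp
  also have "\<dots> \<le> card (vecs R P)" using sub card_vecs[OF assms(1,2)] by (metis card_mono)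
  finally show "card C \<le> card (carrier R) ^ card P" using card_vecs[OF assms(1,2)] by simp
qed

context field
begin

lemma vecs_carrier: "v \<in> vecs R X \<Longrightarrow> v p \<in> carrier R"
  unfolding vecs_def by (cases "p \<in> X") auto

lemma card_carrier_ge2: "finite (carrier R) \<Longrightarrow> 2 \<le> card (carrier R)"
proof -
  assume f: "finite (carrier R)"
  have "{\<zero>, \<one>} \<subseteq> carrier R" by simp
  then have "card {\<zero>, \<one>} \<le> card (carrier R)" using f card_mono by blast
  moreover have "card {\<zero>, \<one>} = 2" using zero_not_one by simp
  ultimately show ?thesis by simp
qed

lemma sub_zero_iff:
  assumes "x \<in> carrier R" "y \<in> carrier R"
  shows "x \<oplus> (\<ominus>\<one> \<otimes> y) = \<zero> \<longleftrightarrow> x = y"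
proof -
  have e: "\<ominus>\<one> \<otimes> y = \<ominus> y" using assms by (simp add: l_minus)
  show ?thesis
  proof
    assume h: "x \<oplus> (\<ominus>\<one> \<otimes> y) = \<zero>"
    have "x = x \<oplus> \<ominus> y \<oplus> y" using assms by (metis a_assoc l_neg r_zero add.inv_closed)
    also have "\<dots> = y" using h e assms by simp
    finally show "x = y" .
  next
    assume "x = y"
    then have "x \<oplus> (\<ominus>\<one> \<otimes> y) = y \<oplus> \<ominus> y" using e by simp
    also have "\<dots> = \<zero>" using assms(2) by (rule r_neg)
    finally show "x \<oplus> (\<ominus>\<one> \<otimes> y) = \<zero>" .
  qed
qed

lemma lin_code_diff:
  assumes "lin_code R X C" "c1 \<in> C" "c2 \<in> C"
  shows "\<exists>d\<in>C. \<forall>p. (d p = \<zero> \<longleftrightarrow> c1 p = c2 p)"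
proof -
  have cv: "\<And>c p. c \<in> C \<Longrightarrow> c p \<in> carrier R"
  proof -
    fix c p assume "c \<in> C"
    then have "c \<in> vecs R X" using assms(1) unfolding lin_code_def by auto
    then show "c p \<in> carrier R" by (rule vecs_carrier)
  qed
  have sc: "\<forall>c\<in>carrier R. \<forall>x\<in>C. (\<lambda>p. c \<otimes> x p) \<in> C"
    and ad: "\<forall>x\<in>C. \<forall>y\<in>C. (\<lambda>p. x p \<oplus> y p) \<in> C"
    using assms(1) unfolding lin_code_def by blast+
  have o: "\<ominus>\<one> \<in> carrier R" by simp
  have m: "(\<lambda>p. \<ominus>\<one> \<otimes> c2 p) \<in> C" using bspec[OF bspec[OF sc o] assms(3)] .
  define d where "d = (\<lambda>p. c1 p \<oplus> (\<ominus>\<one> \<otimes> c2 p))"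
  have "d \<in> C" unfolding d_def using bspec[OF bspec[OF ad assms(2)] m] by simp
  moreover have "\<forall>p. (d p = \<zero> \<longleftrightarrow> c1 p = c2 p)"
    unfolding d_def using sub_zero_iff[OF cv[OF assms(2)] cv[OF assms(3)]] by simp
  ultimately show ?thesis by blast
qed

lemma diag_agree:
  assumes fin: "finite P"
    and z0: "(\<lambda>p. \<zero>) \<in> Z"
    and step: "\<And>v s c. v \<in> Z \<Longrightarrow> s \<in> D \<Longrightarrow> c \<in> carrier R \<Longrightarrow> (\<lambda>p. c \<otimes> s p \<oplus> v p) \<in> Z"
    and dg: "\<And>p. p \<in> P \<Longrightarrow> \<exists>d\<in>D. d p = \<one> \<and> (\<forall>p'\<in>P. p' \<noteq> p \<longrightarrow> d p' = \<zero>)"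
    and v: "v \<in> vecs R P"
  shows "\<exists>z\<in>Z. \<forall>p\<in>P. z p = v p"
proof -
  have vc: "\<And>p. v p \<in> carrier R" using vecs_carrier[OF v] .
  have "Q \<subseteq> P \<Longrightarrow> \<exists>z\<in>Z. \<forall>p\<in>P. z p = (if p \<in> Q then v p else \<zero>)" for Q
  proof (induction Q rule: infinite_finite_induct)
    case (infinite A)
    then show ?case using fin finite_subset by blast
  next
    case empty
    then show ?case using z0 by (intro bexI[of _ "\<lambda>p. \<zero>"]) auto
  next
    case (insert x Q)
    then obtain z where z: "z \<in> Z" "\<forall>p\<in>P. z p = (if p \<in> Q then v p else \<zero>)" by blast
    have xP: "x \<in> P" using insert by blast
    obtain d where d: "d \<in> D" "d x = \<one>" "\<forall>p'\<in>P. p' \<noteq> x \<longrightarrow> d p' = \<zero>" using dg[OF xP] by blast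
    define z' where "z' = (\<lambda>p. v x \<otimes> d p \<oplus> z p)"
    have "z' \<in> Z" unfolding z'_def using step[OF z(1) d(1) vc] .
    moreover have "\<forall>p\<in>P. z' p = (if p \<in> insert x Q then v p else \<zero>)"
    proof
      fix p assume pP: "p \<in> P"
      show "z' p = (if p \<in> insert x Q then v p else \<zero>)"
      proof (cases "p = x")
        case True
        then show ?thesis unfolding z'_def using z(2) pP d(2) insert(2) vc by simp
      next
        case False
        then have "d p = \<zero>" using d(3) pP by blast
        moreover have "z p \<in> carrier R" using z(2) pP vc by simp
        ultimately show ?thesis unfolding z'_def using z(2) pP False vc by simp
      qed
    qed
    ultimately show ?case by blast
  qed
  from this[of P] show ?thesis by auto
qed

lemma diag_card:
  assumes fc: "finite (carrier R)" and fin: "finite P" and fZ: "finite Z"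
    and z0: "(\<lambda>p. \<zero>) \<in> Z"
    and step: "\<And>v s c. v \<in> Z \<Longrightarrow> s \<in> D \<Longrightarrow> c \<in> carrier R \<Longrightarrow> (\<lambda>p. c \<otimes> s p \<oplus> v p) \<in> Z"
    and dg: "\<And>p. p \<in> P \<Longrightarrow> \<exists>d\<in>D. d p = \<one> \<and> (\<forall>p'\<in>P. p' \<noteq> p \<longrightarrow> d p' = \<zero>)"
  shows "card (carrier R) ^ card P \<le> card Z"
proof -
  have "vecs R P \<subseteq> rz R P ` Z"
  proof
    fix v assume v: "v \<in> vecs R P"
    obtain z where z: "z \<in> Z" "\<forall>p\<in>P. z p = v p" using diag_agree[OF fin z0 step dg v] by blast
    have "rz R P z = v" using z(2) v unfolding rz_def vecs_def by auto
    then show "v \<in> rz R P ` Z" using z(1) by blast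
  qed
  then have "card (vecs R P) \<le> card (rz R P ` Z)" using fZ by (simp add: card_mono)
  also have "\<dots> \<le> card Z" using fZ by (rule card_image_le)
  finally show ?thesis using card_vecs[OF fin fc] by simp
qed

lemma lin_code_step:
  assumes "lin_code R X C"
  shows "\<And>v s c. v \<in> C \<Longrightarrow> s \<in> C \<Longrightarrow> c \<in> carrier R \<Longrightarrow> (\<lambda>p. c \<otimes> s p \<oplus> v p) \<in> C"
proof -
  fix v s c assume h: "v \<in> C" "s \<in> C" "c \<in> carrier R"
  have sc: "\<forall>c\<in>carrier R. \<forall>x\<in>C. (\<lambda>p. c \<otimes> x p) \<in> C"
    and ad: "\<forall>x\<in>C. \<forall>y\<in>C. (\<lambda>p. x p \<oplus> y p) \<in> C"
    using assms(1) unfolding lin_code_def by blast+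
  have "(\<lambda>p. c \<otimes> s p) \<in> C" using sc h by blast
  then show "(\<lambda>p. c \<otimes> s p \<oplus> v p) \<in> C" using bspec[OF bspec[OF ad] h(1)] by blast
qed

lemma lin_code_carrier:
  assumes "lin_code R X C" "c \<in> C"
  shows "c p \<in> carrier R"
proof -
  have "c \<in> vecs R X" using assms unfolding lin_code_def by auto
  then show ?thesis by (rule vecs_carrier)
qed

lemma exists_basis:
  assumes fc: "finite (carrier R)" and lc: "lin_code R X C" and fY: "finite Y" and iY: "injP C Y"
  shows "\<exists>P\<subseteq>Y. injP C P \<and> card C = card (carrier R) ^ card P \<and> finite C \<and>
     (\<forall>p\<in>P. \<exists>d\<in>C. d p = \<one> \<and> (\<forall>p'\<in>P. p' \<noteq> p \<longrightarrow> d p' = \<zero>))"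
proof -
  define S where "S = {P. P \<subseteq> Y \<and> injP C P}"
  have ex: "\<exists>n. \<exists>P\<in>S. card P = n" using iY unfolding S_def by blast
  define n where "n = (LEAST n. \<exists>P\<in>S. card P = n)"
  obtain P where PS: "P \<in> S" and cP: "card P = n" using LeastI_ex[OF ex] unfolding n_def by blast
  have mn: "\<And>P'. P' \<in> S \<Longrightarrow> n \<le> card P'" unfolding n_def by (metis (mono_tags, lifting) Least_le)
  have PY: "P \<subseteq> Y" and iP: "injP C P" using PS unfolding S_def by auto
  have fP: "finite P" using PY fY finite_subset by blast
  have cv: "\<And>c p. c \<in> C \<Longrightarrow> c p \<in> carrier R" using lin_code_carrier[OF lc] by blast
  have z0: "(\<lambda>p. \<zero>) \<in> C" using lc unfolding lin_code_def by blast
  have cle: "card C \<le> card (carrier R) ^ card P" and fC: "finite C"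
    using card_le_injP[OF fP fc iP] cv by auto
  have dg: "\<exists>d\<in>C. d p = \<one> \<and> (\<forall>p'\<in>P. p' \<noteq> p \<longrightarrow> d p' = \<zero>)" if pP: "p \<in> P" for p
  proof -
    have "\<not> injP C (P - {p})"
    proof
      assume "injP C (P - {p})"
      then have "P - {p} \<in> S" using PY unfolding S_def by auto
      then have "n \<le> card (P - {p})" by (rule mn)
      moreover have "card (P - {p}) < card P" using fP pP by (meson card_Diff1_less)
      ultimately show False using cP by simp
    qed
    then obtain c1 c2 where c: "c1 \<in> C" "c2 \<in> C" "\<forall>q\<in>P - {p}. c1 q = c2 q" "c1 \<noteq> c2"
      unfolding injP_def by blast
    obtain d where d: "d \<in> C" "\<forall>q. (d q = \<zero> \<longleftrightarrow> c1 q = c2 q)" using lin_code_diff[OF lc c(1,2)] by blast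
    have dp: "d p \<noteq> \<zero>"
    proof
      assume "d p = \<zero>"
      then have a: "\<forall>q\<in>P. d q = (\<lambda>p. \<zero>) q" using d(2) c(3) by auto
      have "\<forall>c1\<in>C. \<forall>c2\<in>C. (\<forall>p\<in>P. c1 p = c2 p) \<longrightarrow> c1 = c2" using iP unfolding injP_def .
      then have "(\<forall>q\<in>P. d q = (\<lambda>p. \<zero>) q) \<longrightarrow> d = (\<lambda>p. \<zero>)" using d(1) z0 by (elim ballE) auto
      then have "d = (\<lambda>p. \<zero>)" using a by blast
      then have "\<forall>q. c1 q = c2 q" using d(2) by simp
      then show False using c(4) by blast
    qed
    have dpc: "d p \<in> carrier R" using cv d(1) by blast
    have un: "d p \<in> Units R" using dp dpc field_Units by blast
    define e where "e = (\<lambda>q. inv (d p) \<otimes> d q)"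
    have "e \<in> C" unfolding e_def using lc d(1) un unfolding lin_code_def by blast
    moreover have "e p = \<one>" unfolding e_def using un by simp
    moreover have "\<forall>p'\<in>P. p' \<noteq> p \<longrightarrow> e p' = \<zero>"
    proof (intro ballI impI)
      fix p' assume "p' \<in> P" "p' \<noteq> p"
      then have "d p' = \<zero>" using d(2) c(3) by auto
      moreover have "inv (d p) \<in> carrier R" using un by simp
      ultimately show "e p' = \<zero>" unfolding e_def by simp
    qed
    ultimately show ?thesis by blast
  qed
  have "card (carrier R) ^ card P \<le> card C"
    by (rule diag_card[OF fc fP fC z0 lin_code_step[OF lc] dg])
  then show ?thesis using cle PY iP fC dg by (intro exI[of _ P]) auto
qed

end



definition OP :: "('b, 'm) ring_scheme \<Rightarrow> (nat \<Rightarrow> 'b) set \<Rightarrow> (nat \<Rightarrow> 'b) set \<Rightarrow> (nat \<times> nat \<Rightarrow> 'b) set" where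
  "OP R C1 C2 = {(\<lambda>(i, j). x i \<otimes>\<^bsub>R\<^esub> y j) | x y. x \<in> C1 \<and> y \<in> C2}"

lemma tensor_code_OP: "tensor_code R C1 C2 = lin_span R (OP R C1 C2)"
  unfolding tensor_code_def OP_def by simp

context field
begin

lemma span_vecs:
  assumes "D \<subseteq> vecs R X"
  shows "lin_span R D \<subseteq> vecs R X"
proof
  fix z assume "z \<in> lin_span R D"
  then show "z \<in> vecs R X"
  proof (induction rule: lin_span.induct)
    case zero
    then show ?case unfolding vecs_def by simp
  next
    case (step v s c)
    have sv: "s \<in> vecs R X" using step assms by blast
    have vv: "v \<in> vecs R X" using step by blast
    have "\<And>p. s p \<in> carrier R" "\<And>p. v p \<in> carrier R" using vecs_carrier[OF sv] vecs_carrier[OF vv] by auto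
    then show ?case using step sv unfolding vecs_def by auto
  qed
qed

lemma span_add:
  assumes "D \<subseteq> vecs R X" "x \<in> lin_span R D" "y \<in> lin_span R D"
  shows "(\<lambda>p. x p \<oplus> y p) \<in> lin_span R D"
  using assms(2)
proof (induction rule: lin_span.induct)
  case zero
  have yv: "y \<in> vecs R X" using span_vecs[OF assms(1)] assms(3) by blast
  have "\<And>p. y p \<in> carrier R" using vecs_carrier[OF yv] .
  then show ?case using assms(3) by simp
next
  case (step v s c)
  have sv: "s \<in> vecs R X" using step assms(1) by blast
  have vv: "v \<in> vecs R X" using span_vecs[OF assms(1)] step by blast
  have yv: "y \<in> vecs R X" using span_vecs[OF assms(1)] assms(3) by blast
  have sc: "\<And>p. s p \<in> carrier R" using vecs_carrier[OF sv] .
  have vc: "\<And>p. v p \<in> carrier R" using vecs_carrier[OF vv] .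
  have yc: "\<And>p. y p \<in> carrier R" using vecs_carrier[OF yv] .
  have "(\<lambda>p. c \<otimes> s p \<oplus> (v p \<oplus> y p)) \<in> lin_span R D"
    using lin_span.step[OF step.IH step.hyps(2,3)] .
  moreover have "(\<lambda>p. c \<otimes> s p \<oplus> v p \<oplus> y p) = (\<lambda>p. c \<otimes> s p \<oplus> (v p \<oplus> y p))"
    using sc vc yc step.hyps(3) by (simp add: a_assoc)
  ultimately show ?case by simp
qed

lemma span_scal:
  assumes "D \<subseteq> vecs R X" "x \<in> lin_span R D" "a \<in> carrier R"
  shows "(\<lambda>p. a \<otimes> x p) \<in> lin_span R D"
  using assms(2)
proof (induction rule: lin_span.induct)
  case zero
  then show ?case using assms(3) lin_span.zero by simp
next
  case (step v s c)
  have sv: "s \<in> vecs R X" using step assms(1) by blast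
  have vv: "v \<in> vecs R X" using span_vecs[OF assms(1)] step by blast
  have sc: "\<And>p. s p \<in> carrier R" using vecs_carrier[OF sv] .
  have vc: "\<And>p. v p \<in> carrier R" using vecs_carrier[OF vv] .
  have "(\<lambda>p. (a \<otimes> c) \<otimes> s p \<oplus> a \<otimes> v p) \<in> lin_span R D"
    using lin_span.step[OF step.IH step.hyps(2)] step.hyps(3) assms(3) by simp
  moreover have "(\<lambda>p. a \<otimes> (c \<otimes> s p \<oplus> v p)) = (\<lambda>p. (a \<otimes> c) \<otimes> s p \<oplus> a \<otimes> v p)"
    using sc vc step.hyps(3) assms(3) by (simp add: r_distr m_assoc)
  ultimately show ?case by simp
qed

lemma span_lin_code:
  assumes "D \<subseteq> vecs R X"
  shows "lin_code R X (lin_span R D)"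
  unfolding lin_code_def
proof (intro conjI ballI)
  show "lin_span R D \<subseteq> vecs R X" by (rule span_vecs[OF assms])
  show "(\<lambda>p. \<zero>) \<in> lin_span R D" by (rule lin_span.zero)
  fix x y assume "x \<in> lin_span R D" "y \<in> lin_span R D"
  then show "(\<lambda>p. x p \<oplus> y p) \<in> lin_span R D" by (rule span_add[OF assms])
next
  fix c x assume "c \<in> carrier R" "x \<in> lin_span R D"
  then show "(\<lambda>p. c \<otimes> x p) \<in> lin_span R D" using span_scal[OF assms] by blast
qed

lemma OP_vecs:
  assumes "lin_code R {1..m} C1" "lin_code R {1..n} C2"
  shows "OP R C1 C2 \<subseteq> vecs R (grid m n)"
proof
  fix z assume "z \<in> OP R C1 C2"
  then obtain x y where z: "z = (\<lambda>(i, j). x i \<otimes> y j)" "x \<in> C1" "y \<in> C2" unfolding OP_def by blast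
  have xv: "x \<in> vecs R {1..m}" and yv: "y \<in> vecs R {1..n}" using assms z unfolding lin_code_def by auto
  have xc: "\<And>i. x i \<in> carrier R" using vecs_carrier[OF xv] .
  have yc: "\<And>j. y j \<in> carrier R" using vecs_carrier[OF yv] .
  show "z \<in> vecs R (grid m n)" unfolding vecs_def
  proof (intro CollectI conjI allI impI ballI)
    fix p show "p \<in> grid m n \<Longrightarrow> z p \<in> carrier R" using xc yc z(1) by (cases p) auto
  next
    fix p assume "p \<notin> grid m n"
    then obtain i j where p: "p = (i, j)" "i \<notin> {1..m} \<or> j \<notin> {1..n}" unfolding grid_def by (cases p) auto
    then have "x i = \<zero> \<or> y j = \<zero>" using xv yv unfolding vecs_def by blast
    then show "z p = \<zero>" using p xc yc z(1) by auto
  qed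
qed

lemma tensor_lin_code:
  assumes "lin_code R {1..m} C1" "lin_code R {1..n} C2"
  shows "lin_code R (grid m n) (tensor_code R C1 C2)"
  unfolding tensor_code_OP using span_lin_code[OF OP_vecs[OF assms]] .

lemma tensor_slices:
  assumes l1: "lin_code R {1..m} C1" and l2: "lin_code R {1..n} C2" and c: "c \<in> tensor_code R C1 C2"
  shows "(\<lambda>j. c (i, j)) \<in> C2" "(\<lambda>i. c (i, j)) \<in> C1"
proof -
  have "c \<in> lin_span R (OP R C1 C2)" using c tensor_code_OP by metis
  then have "(\<lambda>j. c (i, j)) \<in> C2 \<and> (\<lambda>i. c (i, j)) \<in> C1" for i j
  proof (induction rule: lin_span.induct)
    case zero
    then show ?case using l1 l2 unfolding lin_code_def by simp
  next
    case (step v s a)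
    obtain x y where s: "s = (\<lambda>(i, j). x i \<otimes> y j)" "x \<in> C1" "y \<in> C2" using step(2) unfolding OP_def by blast
    have xc: "\<And>i. x i \<in> carrier R" using lin_code_carrier[OF l1 s(2)] .
    have yc: "\<And>j. y j \<in> carrier R" using lin_code_carrier[OF l2 s(3)] .
    have "(\<lambda>j. (a \<otimes> x i) \<otimes> y j \<oplus> v (i, j)) \<in> C2"
      using lin_code_step[OF l2] step xc s(3) by simp
    moreover have "(\<lambda>j. (a \<otimes> x i) \<otimes> y j \<oplus> v (i, j)) = (\<lambda>j. a \<otimes> s (i, j) \<oplus> v (i, j))"
      using s(1) xc yc step(3) by (simp add: m_assoc)
    moreover have "(\<lambda>i. (a \<otimes> y j) \<otimes> x i \<oplus> v (i, j)) \<in> C1"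
      using lin_code_step[OF l1] step yc s(2) by simp
    moreover have "(\<lambda>i. (a \<otimes> y j) \<otimes> x i \<oplus> v (i, j)) = (\<lambda>i. a \<otimes> s (i, j) \<oplus> v (i, j))"
      using s(1) xc yc step(3) by (simp add: m_ac)
    ultimately show ?case by simp
  qed
  then show "(\<lambda>j. c (i, j)) \<in> C2" "(\<lambda>i. c (i, j)) \<in> C1" by auto
qed

lemma tensor_injP:
  assumes l1: "lin_code R {1..m} C1" and l2: "lin_code R {1..n} C2"
    and i1: "injP C1 I1" and i2: "injP C2 I2"
  shows "injP (tensor_code R C1 C2) (I1 \<times> I2)"
  unfolding injP_def
proof (intro ballI impI)
  fix c1 c2 assume c: "c1 \<in> tensor_code R C1 C2" "c2 \<in> tensor_code R C1 C2"
    and ag: "\<forall>p\<in>I1 \<times> I2. c1 p = c2 p"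
  have rows: "(\<lambda>j. c1 (i, j)) = (\<lambda>j. c2 (i, j))" if "i \<in> I1" for i
  proof -
    have h: "\<forall>p\<in>I2. (\<lambda>j. c1 (i, j)) p = (\<lambda>j. c2 (i, j)) p" using ag that by simp
    have imp: "(\<forall>p\<in>I2. (\<lambda>j. c1 (i, j)) p = (\<lambda>j. c2 (i, j)) p) \<longrightarrow> (\<lambda>j. c1 (i, j)) = (\<lambda>j. c2 (i, j))"
      using bspec[OF bspec[OF i2[unfolded injP_def] tensor_slices(1)[OF l1 l2 c(1), of i]]
      tensor_slices(1)[OF l1 l2 c(2), of i]] .
    show ?thesis by (rule mp[OF imp h])
  qed
  have cols: "(\<lambda>i. c1 (i, j)) = (\<lambda>i. c2 (i, j))" for j
  proof -
    have h: "\<forall>p\<in>I1. (\<lambda>i. c1 (i, j)) p = (\<lambda>i. c2 (i, j)) p"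
    proof
      fix i assume "i \<in> I1"
      from fun_cong[OF rows[OF this], of j] show "(\<lambda>i. c1 (i, j)) i = (\<lambda>i. c2 (i, j)) i" by simp
    qed
    have imp: "(\<forall>p\<in>I1. (\<lambda>i. c1 (i, j)) p = (\<lambda>i. c2 (i, j)) p) \<longrightarrow> (\<lambda>i. c1 (i, j)) = (\<lambda>i. c2 (i, j))"
      using bspec[OF bspec[OF i1[unfolded injP_def] tensor_slices(2)[OF l1 l2 c(1), of j]]
      tensor_slices(2)[OF l1 l2 c(2), of j]] .
    show ?thesis by (rule mp[OF imp h])
  qed
  show "c1 = c2"
  proof
    fix p show "c1 p = c2 p" using cols[of "snd p"] by (cases p) (simp add: fun_eq_iff)
  qed
qed

end



lemma injP_vecs:
  assumes "C \<subseteq> vecs R X" shows "injP C X"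
  unfolding injP_def
proof (intro ballI impI)
  fix c1 c2 assume c: "c1 \<in> C" "c2 \<in> C" "\<forall>p\<in>X. c1 p = c2 p"
  show "c1 = c2"
  proof
    fix p show "c1 p = c2 p"
    proof (cases "p \<in> X")
      case True then show ?thesis using c(3) by blast
    next
      case False
      have "c1 \<in> vecs R X" "c2 \<in> vecs R X" using assms c(1,2) by auto
      then show ?thesis using False unfolding vecs_def by simp
    qed
  qed
qed

lemma lin_code_scal: assumes "lin_code R X C" "a \<in> carrier R" "x \<in> C" shows "(\<lambda>p. a \<otimes>\<^bsub>R\<^esub> x p) \<in> C"
proof -
  have sc: "\<forall>c\<in>carrier R. \<forall>x\<in>C. (\<lambda>p. c \<otimes>\<^bsub>R\<^esub> x p) \<in> C" using assms(1) unfolding lin_code_def by blast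
  show ?thesis using bspec[OF bspec[OF sc assms(2)] assms(3)] .
qed

lemma lin_code_add: assumes "lin_code R X C" "x \<in> C" "y \<in> C" shows "(\<lambda>p. x p \<oplus>\<^bsub>R\<^esub> y p) \<in> C"
proof -
  have ad: "\<forall>x\<in>C. \<forall>y\<in>C. (\<lambda>p. x p \<oplus>\<^bsub>R\<^esub> y p) \<in> C" using assms(1) unfolding lin_code_def by blast
  show ?thesis using bspec[OF bspec[OF ad assms(2)] assms(3)] .
qed

lemma lin_code_zero: "lin_code R X C \<Longrightarrow> (\<lambda>p. \<zero>\<^bsub>R\<^esub>) \<in> C"
  unfolding lin_code_def by (elim conjE) assumption

context field
begin

lemma tensor_card_lower:
  assumes fc: "finite (carrier R)"
    and l1: "lin_code R {1..m} C1" and d1: "has_dim R C1 k1"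
    and l2: "lin_code R {1..n} C2" and d2: "has_dim R C2 k2"
  shows "card (carrier R) ^ (k1 * k2) \<le> card (tensor_code R C1 C2)"
proof -
  have q: "1 < card (carrier R)" using card_carrier_ge2[OF fc] by simp
  have i1: "injP C1 {1..m}" using l1 unfolding lin_code_def by (intro injP_vecs) auto
  have i2: "injP C2 {1..n}" using l2 unfolding lin_code_def by (intro injP_vecs) auto
  obtain P1 where P1: "P1 \<subseteq> {1..m}" "card C1 = card (carrier R) ^ card P1"
    "\<forall>p\<in>P1. \<exists>d\<in>C1. d p = \<one> \<and> (\<forall>p'\<in>P1. p' \<noteq> p \<longrightarrow> d p' = \<zero>)"
    using exists_basis[OF fc l1 _ i1] by auto
  obtain P2 where P2: "P2 \<subseteq> {1..n}" "card C2 = card (carrier R) ^ card P2"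
    "\<forall>p\<in>P2. \<exists>d\<in>C2. d p = \<one> \<and> (\<forall>p'\<in>P2. p' \<noteq> p \<longrightarrow> d p' = \<zero>)"
    using exists_basis[OF fc l2 _ i2] by auto
  have k1: "card P1 = k1" using P1(2) d1 q unfolding has_dim_def by simp
  have k2: "card P2 = k2" using P2(2) d2 q unfolding has_dim_def by simp
  have fP: "finite (P1 \<times> P2)" using P1(1) P2(1) finite_subset by blast
  have lT: "lin_code R (grid m n) (tensor_code R C1 C2)" by (rule tensor_lin_code[OF l1 l2])
  have fg: "finite (grid m n)" unfolding grid_def by simp
  have fT: "finite (tensor_code R C1 C2)"
    using lT card_vecs(2)[OF fg fc] finite_subset unfolding lin_code_def by blast
  have z0: "(\<lambda>p. \<zero>) \<in> lin_span R (OP R C1 C2)" by (rule lin_span.zero)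
  have dg: "\<exists>d\<in>OP R C1 C2. d pq = \<one> \<and> (\<forall>p'\<in>P1 \<times> P2. p' \<noteq> pq \<longrightarrow> d p' = \<zero>)"
    if pq: "pq \<in> P1 \<times> P2" for pq
  proof -
    obtain p q where pq': "pq = (p, q)" "p \<in> P1" "q \<in> P2" using pq by blast
    obtain x where x: "x \<in> C1" "x p = \<one>" "\<forall>p'\<in>P1. p' \<noteq> p \<longrightarrow> x p' = \<zero>" using P1(3) pq'(2) by blast
    obtain y where y: "y \<in> C2" "y q = \<one>" "\<forall>p'\<in>P2. p' \<noteq> q \<longrightarrow> y p' = \<zero>" using P2(3) pq'(3) by blast
    have xc: "\<And>i. x i \<in> carrier R" using lin_code_carrier[OF l1 x(1)] .
    have yc: "\<And>j. y j \<in> carrier R" using lin_code_carrier[OF l2 y(1)] .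
    define d where "d = (\<lambda>(i, j). x i \<otimes> y j)"
    have "d \<in> OP R C1 C2" unfolding d_def OP_def using x(1) y(1) by blast
    moreover have "d pq = \<one>" unfolding d_def using pq' x(2) y(2) by simp
    moreover have "\<forall>p'\<in>P1 \<times> P2. p' \<noteq> pq \<longrightarrow> d p' = \<zero>"
    proof (intro ballI impI)
      fix p' assume a: "p' \<in> P1 \<times> P2" "p' \<noteq> pq"
      obtain i j where ij: "p' = (i, j)" "i \<in> P1" "j \<in> P2" using a(1) by blast
      show "d p' = \<zero>"
      proof (cases "i = p")
        case True
        then have "j \<noteq> q" using a(2) ij pq' by simp
        then have "y j = \<zero>" using y(3) ij(3) by blast
        then show ?thesis unfolding d_def using ij xc by simp
      next
        case False
        then have "x i = \<zero>" using x(3) ij(2) by blast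
        then show ?thesis unfolding d_def using ij yc by simp
      qed
    qed
    ultimately show ?thesis by blast
  qed
  have "card (carrier R) ^ card (P1 \<times> P2) \<le> card (lin_span R (OP R C1 C2))"
    by (rule diag_card[OF fc fP fT[unfolded tensor_code_OP] z0 lin_span.step dg])
  moreover have "card (P1 \<times> P2) = k1 * k2" using k1 k2 by (simp add: card_cartesian_product)
  ultimately show ?thesis by (simp add: tensor_code_OP)
qed

lemma card_kernel:
  assumes fc: "finite (carrier R)" and lT: "lin_code R X T" and fX: "finite X"
    and Hc: "\<And>i p. i < h \<Longrightarrow> p \<in> X \<Longrightarrow> H i p \<in> carrier R"
    and C: "C = {c \<in> T. \<forall>i<h. (\<Oplus>p\<in>X. H i p \<otimes> c p) = \<zero>}"
  shows "card T \<le> card C * card (carrier R) ^ h"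
proof -
  have cv: "\<And>c p. c \<in> T \<Longrightarrow> c p \<in> carrier R" using lin_code_carrier[OF lT] by blast
  have fT: "finite T" using lT card_vecs(2)[OF fX fc] finite_subset unfolding lin_code_def by blast
  have fC: "finite C" using fT C by simp
  define phi where "phi = (\<lambda>c. (\<lambda>i::nat. if i < h then (\<Oplus>p\<in>X. H i p \<otimes> c p) else \<zero>))"
  have phiv: "phi c \<in> vecs R {..<h}" if "c \<in> T" for c
    unfolding phi_def vecs_def using Hc cv that by (auto intro!: finsum_closed)
  have fib: "card {c \<in> T. phi c = phi c0} \<le> card C" if c0: "c0 \<in> T" for c0
  proof -
    define sh where "sh = (\<lambda>c. (\<lambda>p. c p \<oplus> (\<ominus>\<one> \<otimes> c0 p)))"
    have inj: "inj_on sh {c \<in> T. phi c = phi c0}"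
    proof (rule inj_onI)
      fix x y assume xy: "x \<in> {c \<in> T. phi c = phi c0}" "y \<in> {c \<in> T. phi c = phi c0}" "sh x = sh y"
      show "x = y"
      proof
        fix p
        have "x p \<oplus> (\<ominus>\<one> \<otimes> c0 p) = y p \<oplus> (\<ominus>\<one> \<otimes> c0 p)" using fun_cong[OF xy(3), of p] unfolding sh_def by simp
        moreover have "x p \<in> carrier R" "y p \<in> carrier R" "\<ominus>\<one> \<otimes> c0 p \<in> carrier R" using xy cv c0 by auto
        ultimately show "x p = y p" using add.right_cancel by blast
      qed
    qed
    have into: "sh ` {c \<in> T. phi c = phi c0} \<subseteq> C"
    proof
      fix z assume "z \<in> sh ` {c \<in> T. phi c = phi c0}"
      then obtain c where c: "c \<in> T" "phi c = phi c0" "z = sh c" by blast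
      have "(\<lambda>p. \<ominus>\<one> \<otimes> c0 p) \<in> T" by (rule lin_code_scal[OF lT _ c0]) simp
      then have zT: "z \<in> T" unfolding c(3) sh_def by (rule lin_code_add[OF lT c(1)])
      have "(\<Oplus>p\<in>X. H i p \<otimes> z p) = \<zero>" if i: "i < h" for i
      proof -
        have e: "(\<Oplus>p\<in>X. H i p \<otimes> c p) = (\<Oplus>p\<in>X. H i p \<otimes> c0 p)"
          using fun_cong[OF c(2), of i] i unfolding phi_def by simp
        have f1: "(\<lambda>p. H i p \<otimes> c p) \<in> X \<rightarrow> carrier R" using Hc[OF i] cv c(1) by auto
        have f2: "(\<lambda>p. \<ominus>\<one> \<otimes> (H i p \<otimes> c0 p)) \<in> X \<rightarrow> carrier R" using Hc[OF i] cv c0 by auto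
        have f3: "(\<lambda>p. H i p \<otimes> c0 p) \<in> X \<rightarrow> carrier R" using Hc[OF i] cv c0 by auto
        have "(\<Oplus>p\<in>X. H i p \<otimes> z p) = (\<Oplus>p\<in>X. H i p \<otimes> c p \<oplus> \<ominus>\<one> \<otimes> (H i p \<otimes> c0 p))"
        proof (rule finsum_cong')
          show "X = X" ..
          show "(\<lambda>p. H i p \<otimes> c p \<oplus> \<ominus>\<one> \<otimes> (H i p \<otimes> c0 p)) \<in> X \<rightarrow> carrier R" using f1 f2 by auto
          fix p assume "p \<in> X"
          then show "H i p \<otimes> z p = H i p \<otimes> c p \<oplus> \<ominus>\<one> \<otimes> (H i p \<otimes> c0 p)"
            unfolding c(3) sh_def using Hc[OF i] cv c(1) c0 by (simp add: r_distr m_lcomm)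
        qed
        also have "\<dots> = (\<Oplus>p\<in>X. H i p \<otimes> c p) \<oplus> (\<Oplus>p\<in>X. \<ominus>\<one> \<otimes> (H i p \<otimes> c0 p))"
          using f1 f2 by (rule finsum_addf)
        also have "(\<Oplus>p\<in>X. \<ominus>\<one> \<otimes> (H i p \<otimes> c0 p)) = \<ominus>\<one> \<otimes> (\<Oplus>p\<in>X. H i p \<otimes> c0 p)"
          using finsum_rdistr[OF fX _ f3, of "\<ominus>\<one>"] by simp
        also have "(\<Oplus>p\<in>X. H i p \<otimes> c p) \<oplus> \<ominus>\<one> \<otimes> (\<Oplus>p\<in>X. H i p \<otimes> c0 p) = \<zero>"
          unfolding e by (rule iffD2[OF sub_zero_iff]) (use f3 in auto)
        finally show ?thesis .
      qed
      then show "z \<in> C" using zT C by simp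
    qed
    have "card {c \<in> T. phi c = phi c0} = card (sh ` {c \<in> T. phi c = phi c0})" using card_image[OF inj] by simp
    also have "\<dots> \<le> card C" using into fC by (simp add: card_mono)
    finally show ?thesis .
  qed
  have Tun: "T = (\<Union>w\<in>phi ` T. {c \<in> T. phi c = w})" by blast
  have "card T \<le> (\<Sum>w\<in>phi ` T. card {c \<in> T. phi c = w})"
    by (subst Tun) (rule card_UN_le, simp add: fT)
  also have "\<dots> \<le> (\<Sum>w\<in>phi ` T. card C)"
    by (rule sum_mono) (use fib in auto)
  also have "\<dots> = card (phi ` T) * card C" by simp
  also have "card (phi ` T) \<le> card (vecs R {..<h})"
    using phiv card_vecs(2)[of "{..<h}" R] fc by (intro card_mono) auto
  then have "card (phi ` T) * card C \<le> card (vecs R {..<h}) * card C" by simp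
  also have "card (vecs R {..<h}) = card (carrier R) ^ h" using card_vecs(1)[of "{..<h}" R] fc by simp
  finally show ?thesis by (simp add: mult.commute)
qed

end



lemma span_mono:
  assumes "D \<subseteq> D'" shows "lin_span R D \<subseteq> lin_span R D'"
proof
  fix x assume "x \<in> lin_span R D"
  then show "x \<in> lin_span R D'"
  proof (induction rule: lin_span.induct)
    case zero then show ?case by (rule lin_span.zero)
  next
    case (step v s c)
    then show ?case using assms by (intro lin_span.step) auto
  qed
qed

lemma tensor_mono:
  assumes "C1' \<subseteq> C1" "C2' \<subseteq> C2"
  shows "tensor_code R C1' C2' \<subseteq> tensor_code R C1 C2"
  unfolding tensor_code_OP
proof (rule span_mono)
  show "OP R C1' C2' \<subseteq> OP R C1 C2" unfolding OP_def using assms by blast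
qed

context field
begin

lemma kernel_lin_code:
  assumes lT: "lin_code R X T" and fX: "finite X"
    and Hc: "\<And>i p. i < h \<Longrightarrow> p \<in> X \<Longrightarrow> H i p \<in> carrier R"
  shows "lin_code R X {c \<in> T. \<forall>i<h. (\<Oplus>p\<in>X. H i p \<otimes> c p) = \<zero>}"
proof -
  let ?C = "{c \<in> T. \<forall>i<h. (\<Oplus>p\<in>X. H i p \<otimes> c p) = \<zero>}"
  have cv: "\<And>c p. c \<in> T \<Longrightarrow> c p \<in> carrier R" using lin_code_carrier[OF lT] by blast
  have sub: "?C \<subseteq> vecs R X" using lT unfolding lin_code_def by auto
  have z: "(\<lambda>p. \<zero>) \<in> ?C"
  proof -
    have "(\<Oplus>p\<in>X. H i p \<otimes> \<zero>) = \<zero>" if "i < h" for i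
    proof -
      have "(\<Oplus>p\<in>X. H i p \<otimes> \<zero>) = (\<Oplus>p\<in>X. \<zero>)"
        by (rule finsum_cong') (use Hc that in auto)
      then show ?thesis by simp
    qed
    then show ?thesis using lin_code_zero[OF lT] by simp
  qed
  have ad: "(\<lambda>p. x p \<oplus> y p) \<in> ?C" if x: "x \<in> ?C" and y: "y \<in> ?C" for x y
  proof -
    have xT: "x \<in> T" and yT: "y \<in> T" using x y by auto
    have "(\<Oplus>p\<in>X. H i p \<otimes> (x p \<oplus> y p)) = \<zero>" if i: "i < h" for i
    proof -
      have f1: "(\<lambda>p. H i p \<otimes> x p) \<in> X \<rightarrow> carrier R" using Hc[OF i] cv xT by auto
      have f2: "(\<lambda>p. H i p \<otimes> y p) \<in> X \<rightarrow> carrier R" using Hc[OF i] cv yT by auto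
      have "(\<Oplus>p\<in>X. H i p \<otimes> (x p \<oplus> y p)) = (\<Oplus>p\<in>X. H i p \<otimes> x p \<oplus> H i p \<otimes> y p)"
        by (rule finsum_cong') (use Hc[OF i] cv xT yT f1 f2 in \<open>auto simp: r_distr\<close>)
      also have "\<dots> = (\<Oplus>p\<in>X. H i p \<otimes> x p) \<oplus> (\<Oplus>p\<in>X. H i p \<otimes> y p)"
        using f1 f2 by (rule finsum_addf)
      also have "\<dots> = \<zero>" using x y i by simp
      finally show ?thesis .
    qed
    then show ?thesis using lin_code_add[OF lT xT yT] by simp
  qed
  have sc: "(\<lambda>p. a \<otimes> x p) \<in> ?C" if a: "a \<in> carrier R" and x: "x \<in> ?C" for a x
  proof -
    have xT: "x \<in> T" using x by auto
    have "(\<Oplus>p\<in>X. H i p \<otimes> (a \<otimes> x p)) = \<zero>" if i: "i < h" for i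
    proof -
      have f1: "(\<lambda>p. H i p \<otimes> x p) \<in> X \<rightarrow> carrier R" using Hc[OF i] cv xT by auto
      have "(\<Oplus>p\<in>X. H i p \<otimes> (a \<otimes> x p)) = (\<Oplus>p\<in>X. a \<otimes> (H i p \<otimes> x p))"
        by (rule finsum_cong') (use Hc[OF i] cv xT a f1 in \<open>auto simp: m_lcomm\<close>)
      also have "\<dots> = a \<otimes> (\<Oplus>p\<in>X. H i p \<otimes> x p)"
        using finsum_rdistr[OF fX a f1] by simp
      also have "\<dots> = \<zero>" using x i a by simp
      finally show ?thesis .
    qed
    then show ?thesis using lin_code_scal[OF lT a xT] by simp
  qed
  show ?thesis unfolding lin_code_def using sub z ad sc by blast
qed

lemma restrict_lin_code:
  assumes lC: "lin_code R X C"
  shows "lin_code R S (rz R S ` C)"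
proof -
  have cv: "\<And>c p. c \<in> C \<Longrightarrow> c p \<in> carrier R" using lin_code_carrier[OF lC] by blast
  have sub: "rz R S ` C \<subseteq> vecs R S" using cv unfolding rz_def vecs_def by auto
  have z: "(\<lambda>p. \<zero>) \<in> rz R S ` C"
  proof
    show "(\<lambda>p. \<zero>) = rz R S (\<lambda>p. \<zero>)" unfolding rz_def by auto
  qed (rule lin_code_zero[OF lC])
  have ad: "(\<lambda>p. x p \<oplus> y p) \<in> rz R S ` C" if x: "x \<in> rz R S ` C" and y: "y \<in> rz R S ` C" for x y
  proof -
    obtain cx cy where c: "cx \<in> C" "cy \<in> C" "x = rz R S cx" "y = rz R S cy" using x y by blast
    have "(\<lambda>p. x p \<oplus> y p) = rz R S (\<lambda>p. cx p \<oplus> cy p)" unfolding c rz_def by auto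
    then show ?thesis using lin_code_add[OF lC c(1,2)] by blast
  qed
  have sc: "(\<lambda>p. a \<otimes> x p) \<in> rz R S ` C" if a: "a \<in> carrier R" and x: "x \<in> rz R S ` C" for a x
  proof -
    obtain cx where c: "cx \<in> C" "x = rz R S cx" using x by blast
    have "(\<lambda>p. a \<otimes> x p) = rz R S (\<lambda>p. a \<otimes> cx p)" unfolding c rz_def using a by auto
    then show ?thesis using lin_code_scal[OF lC a c(1)] by blast
  qed
  show ?thesis unfolding lin_code_def using sub z ad sc by blast
qed

lemma zero_sub_lin_code:
  assumes lC: "lin_code R X C"
  shows "lin_code R X {x \<in> C. \<forall>j\<in>J. x j = \<zero>}"
proof -
  have cv: "\<And>c p. c \<in> C \<Longrightarrow> c p \<in> carrier R" using lin_code_carrier[OF lC] by blast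
  have sub: "{x \<in> C. \<forall>j\<in>J. x j = \<zero>} \<subseteq> vecs R X" using lC unfolding lin_code_def by auto
  have z: "(\<lambda>p. \<zero>) \<in> {x \<in> C. \<forall>j\<in>J. x j = \<zero>}" using lin_code_zero[OF lC] by simp
  have ad: "(\<lambda>p. x p \<oplus> y p) \<in> {x \<in> C. \<forall>j\<in>J. x j = \<zero>}"
    if x: "x \<in> {x \<in> C. \<forall>j\<in>J. x j = \<zero>}" and y: "y \<in> {x \<in> C. \<forall>j\<in>J. x j = \<zero>}" for x y
    using lin_code_add[OF lC, of x y] x y by simp
  have sc: "(\<lambda>p. a \<otimes> x p) \<in> {x \<in> C. \<forall>j\<in>J. x j = \<zero>}"
    if a: "a \<in> carrier R" and x: "x \<in> {x \<in> C. \<forall>j\<in>J. x j = \<zero>}" for a x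
    using lin_code_scal[OF lC a, of x] x a by simp
  show ?thesis unfolding lin_code_def using sub z ad sc by blast
qed

end



lemma corrects_injP: "corrects m n C E \<longleftrightarrow> injP C (grid m n - E)"
  unfolding corrects_def injP_def by simp

lemma finite_grid: "finite (grid m n)" unfolding grid_def by simp

lemma card_grid: "card (grid m n) = m * n" unfolding grid_def by (simp add: card_cartesian_product)

lemma unpack0:
  assumes "correctable m n a b 0 E"
  obtains F0 :: "nat ring" and C1 C2 k1 k2 where "field F0" "finite (carrier F0)"
    "lin_code F0 {1..m} C1" "k1 \<ge> m - a" "has_dim F0 C1 k1"
    "lin_code F0 {1..n} C2" "k2 \<ge> n - b" "has_dim F0 C2 k2"
    "injP (tensor_code F0 C1 C2) (grid m n - E)" "E \<subseteq> grid m n"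
proof -
  from assms obtain F0 :: "nat ring" and C where F: "field F0" "finite (carrier F0)"
    "topo_code F0 m n a b 0 C" "corrects m n C E" "E \<subseteq> grid m n"
    unfolding correctable_def by blast
  from F(3) obtain C1 C2 and H :: "nat \<Rightarrow> nat \<times> nat \<Rightarrow> nat" where t0: "lin_code F0 {1..m} C1 \<and> (\<exists>k\<ge>m - a. has_dim F0 C1 k) \<and>
    lin_code F0 {1..n} C2 \<and> (\<exists>k\<ge>n - b. has_dim F0 C2 k) \<and>
    (\<forall>i<0. \<forall>p\<in>grid m n. H i p \<in> carrier F0) \<and>
    C = {c \<in> tensor_code F0 C1 C2. \<forall>i<0. (\<Oplus>\<^bsub>F0\<^esub>p\<in>grid m n. H i p \<otimes>\<^bsub>F0\<^esub> c p) = \<zero>\<^bsub>F0\<^esub>}"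
    unfolding topo_code_def by blast
  obtain k1 k2 where t: "lin_code F0 {1..m} C1" "k1 \<ge> m - a" "has_dim F0 C1 k1"
    "lin_code F0 {1..n} C2" "k2 \<ge> n - b" "has_dim F0 C2 k2"
    "C = {c \<in> tensor_code F0 C1 C2. \<forall>i<0. (\<Oplus>\<^bsub>F0\<^esub>p\<in>grid m n. H i p \<otimes>\<^bsub>F0\<^esub> c p) = \<zero>\<^bsub>F0\<^esub>}"
    using t0 by (elim conjE exE) blast
  have "C = tensor_code F0 C1 C2" using t(7) by simp
  then show ?thesis using that F t corrects_injP by metis
qed

lemma mk_correctable0:
  fixes F0 :: "nat ring"
  assumes "field F0" "finite (carrier F0)"
    "lin_code F0 {1..m} C1" "k1 \<ge> m - a" "has_dim F0 C1 k1"
    "lin_code F0 {1..n} C2" "k2 \<ge> n - b" "has_dim F0 C2 k2"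
    "injP (tensor_code F0 C1 C2) (grid m n - E)" "E \<subseteq> grid m n"
  shows "correctable m n a b 0 E"
proof -
  have e: "tensor_code F0 C1 C2 = {c \<in> tensor_code F0 C1 C2. \<forall>i::nat<0. (\<Oplus>\<^bsub>F0\<^esub>p\<in>grid m n. (\<lambda>i p. \<zero>\<^bsub>F0\<^esub>) i p \<otimes>\<^bsub>F0\<^esub> c p) = \<zero>\<^bsub>F0\<^esub>}"
    by simp
  have top: "topo_code F0 m n a b 0 (tensor_code F0 C1 C2)"
    unfolding topo_code_def
    apply (rule exI[of _ C1], rule exI[of _ C2], rule exI[of _ "\<lambda>i p. \<zero>\<^bsub>F0\<^esub>"])
    apply (intro conjI)
         apply (rule assms(3))
        apply (use assms(4,5) in blast)
       apply (rule assms(6))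
      apply (use assms(7,8) in blast)
     apply simp
    apply (rule e)
    done
  have cor: "corrects m n (tensor_code F0 C1 C2) E" by (simp add: corrects_injP assms(9))
  show ?thesis unfolding correctable_def
  proof (intro conjI)
    show "E \<subseteq> grid m n" by (rule assms(10))
    show "\<exists>(F :: nat ring) C. field F \<and> finite (carrier F) \<and> topo_code F m n a b 0 C \<and> corrects m n C E"
      using assms(1,2) top cor by blast
  qed
qed

lemma extend_correctable:
  assumes c0: "correctable m n a b 0 E" and F: "F \<subseteq> grid m n - E" "card F = h"
  shows "correctable m n a b h (E \<union> F)"
proof -
  obtain F0 :: "nat ring" and C1 C2 k1 k2 where u: "field F0" "finite (carrier F0)"
    "lin_code F0 {1..m} C1" "k1 \<ge> m - a" "has_dim F0 C1 k1"
    "lin_code F0 {1..n} C2" "k2 \<ge> n - b" "has_dim F0 C2 k2"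
    "injP (tensor_code F0 C1 C2) (grid m n - E)" "E \<subseteq> grid m n"
    by (rule unpack0[OF c0])
  interpret K: field F0 by (rule u(1))
  let ?T = "tensor_code F0 C1 C2"
  have lT: "lin_code F0 (grid m n) ?T" by (rule K.tensor_lin_code[OF u(3) u(6)])
  have fF: "finite F" using F(1) finite_grid finite_subset by blast
  obtain f where f: "bij_betw f {0..<h} F" using ex_bij_betw_nat_finite[OF fF] F(2) by blast
  define H where "H = (\<lambda>i p. if p = f i then \<one>\<^bsub>F0\<^esub> else \<zero>\<^bsub>F0\<^esub>)"
  define C where "C = {c \<in> ?T. \<forall>i<h. (\<Oplus>\<^bsub>F0\<^esub>p\<in>grid m n. H i p \<otimes>\<^bsub>F0\<^esub> c p) = \<zero>\<^bsub>F0\<^esub>}"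
  have Hc: "\<And>i p. H i p \<in> carrier F0" unfolding H_def by simp
  have top: "topo_code F0 m n a b h C"
    unfolding topo_code_def
    apply (rule exI[of _ C1], rule exI[of _ C2], rule exI[of _ H])
    apply (intro conjI)
         apply (rule u(3))
        apply (use u(4,5) in blast)
       apply (rule u(6))
      apply (use u(7,8) in blast)
     apply (simp add: Hc)
    apply (rule C_def)
    done
  have ev: "(\<Oplus>\<^bsub>F0\<^esub>p\<in>grid m n. H i p \<otimes>\<^bsub>F0\<^esub> c p) = c (f i)" if c: "c \<in> ?T" and i: "i < h" for c i
  proof -
    have "f i \<in> F" using f i unfolding bij_betw_def by auto
    then have fi: "f i \<in> grid m n" using F(1) by blast
    have cc: "\<And>p. c p \<in> carrier F0" using K.lin_code_carrier[OF lT c] .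
    have "(\<Oplus>\<^bsub>F0\<^esub>p\<in>grid m n. H i p \<otimes>\<^bsub>F0\<^esub> c p) = (\<Oplus>\<^bsub>F0\<^esub>p\<in>grid m n. if f i = p then c p else \<zero>\<^bsub>F0\<^esub>)"
      by (rule K.finsum_cong') (use cc in \<open>auto simp: H_def\<close>)
    also have "\<dots> = c (f i)" by (rule K.finsum_singleton[OF fi finite_grid]) (use cc in auto)
    finally show ?thesis .
  qed
  have "injP C (grid m n - (E \<union> F))"
    unfolding injP_def
  proof (intro ballI impI)
    fix c1 c2 assume c: "c1 \<in> C" "c2 \<in> C" "\<forall>p\<in>grid m n - (E \<union> F). c1 p = c2 p"
    have cT: "c1 \<in> ?T" "c2 \<in> ?T" using c unfolding C_def by auto
    have "\<forall>p\<in>grid m n - E. c1 p = c2 p"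
    proof
      fix p assume p: "p \<in> grid m n - E"
      show "c1 p = c2 p"
      proof (cases "p \<in> F")
        case True
        then obtain i where i: "i < h" "p = f i" using f unfolding bij_betw_def by auto
        have "c1 (f i) = \<zero>\<^bsub>F0\<^esub>" using ev[OF cT(1) i(1)] c(1) i(1) unfolding C_def by simp
        moreover have "c2 (f i) = \<zero>\<^bsub>F0\<^esub>" using ev[OF cT(2) i(1)] c(2) i(1) unfolding C_def by simp
        ultimately show ?thesis using i by simp
      next
        case False then show ?thesis using c(3) p by blast
      qed
    qed
    then show "c1 = c2" using u(9) cT unfolding injP_def by blast
  qed
  then have cor: "corrects m n C (E \<union> F)" by (simp add: corrects_injP)
  show ?thesis unfolding correctable_def
  proof (intro conjI)
    show "E \<union> F \<subseteq> grid m n" using u(10) F(1) by blast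
    show "\<exists>(F' :: nat ring) C. field F' \<and> finite (carrier F') \<and> topo_code F' m n a b h C \<and> corrects m n C (E \<union> F)"
      using u(1,2) top cor by blast
  qed
qed



context field
begin

lemma sub_code:
  fixes m :: nat and C1 :: "(nat \<Rightarrow> 'a) set"
  assumes fc: "finite (carrier R)" and l1: "lin_code R {1..m} C1" and d1: "has_dim R C1 k1"
    and ka: "k1 \<ge> r"
  obtains C1' I1 where "lin_code R {1..m} C1'" "has_dim R C1' r" "C1' \<subseteq> C1"
    "injP C1' I1" "card I1 = r" "finite I1"
proof -
  have q: "1 < card (carrier R)" using card_carrier_ge2[OF fc] by simp
  have i1: "injP C1 {1..m}" using l1 unfolding lin_code_def by (intro injP_vecs) auto
  obtain P1 where P1: "P1 \<subseteq> {1..m}" "injP C1 P1" "card C1 = card (carrier R) ^ card P1" "finite C1"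
    "\<forall>p\<in>P1. \<exists>d\<in>C1. d p = \<one> \<and> (\<forall>p'\<in>P1. p' \<noteq> p \<longrightarrow> d p' = \<zero>)"
  proof -
    have "\<exists>P\<subseteq>{1..m}. injP C1 P \<and> card C1 = card (carrier R) ^ card P \<and> finite C1 \<and>
     (\<forall>p\<in>P. \<exists>d\<in>C1. d p = \<one> \<and> (\<forall>p'\<in>P. p' \<noteq> p \<longrightarrow> d p' = \<zero>))"
      using exists_basis[OF fc l1 _ i1] by simp
    then show ?thesis using that by blast
  qed
  have k1: "card P1 = k1" using P1(3) d1 q unfolding has_dim_def by simp
  have fP1: "finite P1" using P1(1) finite_subset by blast
  obtain J1 where J1: "J1 \<subseteq> P1" "card J1 = k1 - r" "finite J1"
    using obtain_subset_with_card_n[of "k1 - r" P1] k1 by auto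
  define C1' where "C1' = {x \<in> C1. \<forall>j\<in>J1. x j = \<zero>}"
  define I1 where "I1 = P1 - J1"
  have l1': "lin_code R {1..m} C1'" unfolding C1'_def by (rule zero_sub_lin_code[OF l1])
  have cI: "card I1 = r" unfolding I1_def using J1 k1 ka fP1 by (simp add: card_Diff_subset)
  have fI: "finite I1" unfolding I1_def using fP1 by simp
  have sub: "C1' \<subseteq> C1" unfolding C1'_def by blast
  have iI: "injP C1' I1" unfolding injP_def
  proof (intro ballI impI)
    fix x y assume xy: "x \<in> C1'" "y \<in> C1'" "\<forall>p\<in>I1. x p = y p"
    have "\<forall>p\<in>P1. x p = y p"
    proof
      fix p assume "p \<in> P1"
      then show "x p = y p" using xy unfolding C1'_def I1_def by (cases "p \<in> J1") auto
    qed
    then show "x = y" using P1(2) xy(1,2) sub unfolding injP_def by blast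
  qed
  have cv: "\<And>c p. c \<in> C1' \<Longrightarrow> c p \<in> carrier R" using lin_code_carrier[OF l1'] by blast
  have le0: "card C1' \<le> card (carrier R) ^ card I1" by (rule card_le_injP(1)[OF fI fc iI]) (rule cv)
  have le: "card C1' \<le> card (carrier R) ^ r" using le0 cI by simp
  have fC': "finite C1'" using P1(4) sub finite_subset by blast
  have dg: "\<exists>d\<in>C1'. d p = \<one> \<and> (\<forall>p'\<in>I1. p' \<noteq> p \<longrightarrow> d p' = \<zero>)" if p: "p \<in> I1" for p
  proof -
    have pP: "p \<in> P1" "p \<notin> J1" using p unfolding I1_def by auto
    obtain d where d: "d \<in> C1" "d p = \<one>" "\<forall>p'\<in>P1. p' \<noteq> p \<longrightarrow> d p' = \<zero>" using P1(5) pP(1) by blast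
    have "d \<in> C1'" unfolding C1'_def using d J1(1) pP(2) by auto
    moreover have "\<forall>p'\<in>I1. p' \<noteq> p \<longrightarrow> d p' = \<zero>" using d(3) unfolding I1_def by auto
    ultimately show ?thesis using d(2) by blast
  qed
  have ge: "card (carrier R) ^ card I1 \<le> card C1'"
    by (rule diag_card[OF fc fI fC' lin_code_zero[OF l1'] lin_code_step[OF l1'] dg])
  have "has_dim R C1' r" unfolding has_dim_def using le ge cI by simp
  then show ?thesis using that l1' sub iI cI fI by blast
qed

end

lemma card_S:
  assumes cm: "correctable_max m n a b 0 E"
  shows "card (grid m n - E) = (m - a) * (n - b)"
proof -
  have c0: "correctable m n a b 0 E" and mx: "\<not> (\<exists>E2. E \<subset> E2 \<and> correctable m n a b 0 E2)"
    using cm unfolding correctable_max_def by auto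
  obtain F0 :: "nat ring" and C1 C2 k1 k2 where u: "field F0" "finite (carrier F0)"
    "lin_code F0 {1..m} C1" "k1 \<ge> m - a" "has_dim F0 C1 k1"
    "lin_code F0 {1..n} C2" "k2 \<ge> n - b" "has_dim F0 C2 k2"
    "injP (tensor_code F0 C1 C2) (grid m n - E)" "E \<subseteq> grid m n"
    by (rule unpack0[OF c0])
  interpret K: field F0 by (rule u(1))
  define S where "S = grid m n - E"
  define q where "q = card (carrier F0)"
  have q: "1 < q" unfolding q_def using K.card_carrier_ge2[OF u(2)] by simp
  have fS: "finite S" unfolding S_def using finite_grid by simp
  let ?T = "tensor_code F0 C1 C2"
  have lT: "lin_code F0 (grid m n) ?T" by (rule K.tensor_lin_code[OF u(3) u(6)])
  have cvT: "\<And>c p. c \<in> ?T \<Longrightarrow> c p \<in> carrier F0" using K.lin_code_carrier[OF lT] by blast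
  have iT: "injP ?T S" using u(9) unfolding S_def .
  have ge: "(m - a) * (n - b) \<le> card S"
  proof -
    have "q ^ ((m - a) * (n - b)) \<le> q ^ (k1 * k2)"
      using q u(4,7) by (intro power_increasing mult_le_mono) auto
    also have "\<dots> \<le> card ?T" unfolding q_def by (rule K.tensor_card_lower[OF u(2) u(3) u(5) u(6) u(8)])
    also have "\<dots> \<le> q ^ card S" unfolding q_def by (rule card_le_injP(1)[OF fS u(2) iT]) (rule cvT)
    finally show ?thesis by (rule power_le_imp_le_exp[OF q])
  qed
  have le: "card S \<le> (m - a) * (n - b)"
  proof (rule ccontr)
    assume big: "\<not> card S \<le> (m - a) * (n - b)"
    obtain C1' I1 where s1: "lin_code F0 {1..m} C1'" "has_dim F0 C1' (m - a)" "C1' \<subseteq> C1"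
      "injP C1' I1" "card I1 = m - a" "finite I1"
      by (rule K.sub_code[OF u(2) u(3) u(5) u(4)])
    obtain C2' I2 where s2: "lin_code F0 {1..n} C2'" "has_dim F0 C2' (n - b)" "C2' \<subseteq> C2"
      "injP C2' I2" "card I2 = n - b" "finite I2"
      by (rule K.sub_code[OF u(2) u(6) u(8) u(7)])
    let ?T' = "tensor_code F0 C1' C2'"
    have sT: "?T' \<subseteq> ?T" by (rule tensor_mono[OF s1(3) s2(3)])
    have lT': "lin_code F0 (grid m n) ?T'" by (rule K.tensor_lin_code[OF s1(1) s2(1)])
    have iT': "injP ?T' S" using iT sT unfolding injP_def by blast
    obtain P where P: "P \<subseteq> S" "injP ?T' P" "card ?T' = q ^ card P"
      using K.exists_basis[OF u(2) lT' fS iT'] unfolding q_def by blast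
    have iII: "injP ?T' (I1 \<times> I2)" by (rule K.tensor_injP[OF s1(1) s2(1) s1(4) s2(4)])
    have cvT': "\<And>c p. c \<in> ?T' \<Longrightarrow> c p \<in> carrier F0" using K.lin_code_carrier[OF lT'] by blast
    have "q ^ card P \<le> q ^ card (I1 \<times> I2)"
      proof -
      have "card ?T' \<le> q ^ card (I1 \<times> I2)" unfolding q_def
        by (rule card_le_injP(1)[OF _ u(2) iII]) (use s1(6) s2(6) cvT' in auto)
      then show ?thesis using P(3) by simp
    qed
    then have "card P \<le> (m - a) * (n - b)" using q s1(5) s2(5) by (simp add: card_cartesian_product)
    then have "P \<noteq> S" using big by auto
    then obtain s where s: "s \<in> S" "s \<notin> P" using P(1) by blast
    define E2 where "E2 = grid m n - P"
    have PS: "P \<subseteq> grid m n" using P(1) unfolding S_def by blast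
    have "E \<subset> E2"
    proof
      show "E \<subseteq> E2" unfolding E2_def using u(10) P(1) unfolding S_def by blast
      show "E \<noteq> E2" using s unfolding E2_def S_def by blast
    qed
    moreover have "correctable m n a b 0 E2"
    proof (rule mk_correctable0[OF u(1,2) s1(1) _ s1(2) s2(1) _ s2(2)])
      have "grid m n - E2 = P" unfolding E2_def using PS by blast
      then show "injP ?T' (grid m n - E2)" using P(2) by simp
      show "E2 \<subseteq> grid m n" unfolding E2_def by blast
    qed auto
    ultimately show False using mx by blast
  qed
  show ?thesis using ge le unfolding S_def by simp
qed



lemma injPD: "injP C P \<Longrightarrow> c1 \<in> C \<Longrightarrow> c2 \<in> C \<Longrightarrow> (\<And>p. p \<in> P \<Longrightarrow> c1 p = c2 p) \<Longrightarrow> c1 = c2"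
  unfolding injP_def by blast

lemma injP_mono: assumes "injP C P" "P \<subseteq> Q" shows "injP C Q"
  unfolding injP_def
proof (intro ballI impI)
  fix c1 c2 assume c: "c1 \<in> C" "c2 \<in> C" "\<forall>p\<in>Q. c1 p = c2 p"
  show "c1 = c2"
  proof (rule injPD[OF assms(1) c(1,2)])
    fix p assume "p \<in> P" then show "c1 p = c2 p" using c(3) assms(2) by blast
  qed
qed

theorem corollary1:
  fixes R :: "'b ring" and m n a b h k :: nat
    and E' :: "(nat \<times> nat) set" and C :: "(nat \<times> nat \<Rightarrow> 'b) set"
  assumes "field R" and "finite (carrier R)"
    and "a < m" and "b < n"
    and "h \<le> (m - a) * (n - b) - max (m - a) (n - b)"
    and "correctable_max m n a b 0 E'"
    and "MR_code R m n a b h C"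
    and "has_dim R C k"
  shows "MDS_code R (grid m n - E') (restrict_code R (grid m n - E') C) (m * n - card E') k (h + 1)"
proof -
  interpret K: field R by (rule assms(1))
  note fc = assms(2)
  have top: "topo_code R m n a b h C" and mr: "\<And>E. correctable m n a b h E \<Longrightarrow> corrects m n C E"
    using assms(7) unfolding MR_code_def by auto
  from top obtain Ccol Crow and H :: "nat \<Rightarrow> nat \<times> nat \<Rightarrow> 'b" where t0:
    "lin_code R {1..m} Ccol \<and> (\<exists>k\<ge>m - a. has_dim R Ccol k) \<and>
    lin_code R {1..n} Crow \<and> (\<exists>k\<ge>n - b. has_dim R Crow k) \<and>
    (\<forall>i<h. \<forall>p\<in>grid m n. H i p \<in> carrier R) \<and>
    C = {c \<in> tensor_code R Ccol Crow. \<forall>i<h. (\<Oplus>\<^bsub>R\<^esub>p\<in>grid m n. H i p \<otimes>\<^bsub>R\<^esub> c p) = \<zero>\<^bsub>R\<^esub>}"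
    unfolding topo_code_def by blast
  obtain k1 k2 where t: "lin_code R {1..m} Ccol" "k1 \<ge> m - a" "has_dim R Ccol k1"
    "lin_code R {1..n} Crow" "k2 \<ge> n - b" "has_dim R Crow k2"
    "\<forall>i<h. \<forall>p\<in>grid m n. H i p \<in> carrier R"
    "C = {c \<in> tensor_code R Ccol Crow. \<forall>i<h. (\<Oplus>\<^bsub>R\<^esub>p\<in>grid m n. H i p \<otimes>\<^bsub>R\<^esub> c p) = \<zero>\<^bsub>R\<^esub>}"
    using t0 by (elim conjE exE) blast
  define S where "S = grid m n - E'"
  define q where "q = card (carrier R)"
  define KK where "KK = (m - a) * (n - b)"
  have q: "1 < q" unfolding q_def using K.card_carrier_ge2[OF fc] by simp
  have cS: "card S = KK" unfolding S_def KK_def by (rule card_S[OF assms(6)])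
  have c0: "correctable m n a b 0 E'" using assms(6) unfolding correctable_max_def by blast
  have Esub: "E' \<subseteq> grid m n" using c0 unfolding correctable_def by blast
  have fS: "finite S" unfolding S_def using finite_grid by simp
  have corrF: "injP C (S - F)" if F: "F \<subseteq> S" "card F = h" for F
  proof -
    have "correctable m n a b h (E' \<union> F)" by (rule extend_correctable[OF c0 F(1)[unfolded S_def] F(2)])
    then have "injP C (grid m n - (E' \<union> F))" using mr corrects_injP by blast
    moreover have "grid m n - (E' \<union> F) = S - F" unfolding S_def by blast
    ultimately show ?thesis by simp
  qed
  let ?T = "tensor_code R Ccol Crow"
  have lT: "lin_code R (grid m n) ?T" by (rule K.tensor_lin_code[OF t(1) t(4)])
  have HcX: "\<And>i p. i < h \<Longrightarrow> p \<in> grid m n \<Longrightarrow> H i p \<in> carrier R" using t(7) by blast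
  have lC: "lin_code R (grid m n) C" unfolding t(8) by (rule K.kernel_lin_code[OF lT finite_grid HcX])
  have cvC: "\<And>c p. c \<in> C \<Longrightarrow> c p \<in> carrier R" using K.lin_code_carrier[OF lC] by blast
  have z0: "(\<lambda>p. \<zero>\<^bsub>R\<^esub>) \<in> C" by (rule lin_code_zero[OF lC])
  have ma: "m - a \<ge> 1" "n - b \<ge> 1" using assms(3,4) by auto
  have mxle: "max (m - a) (n - b) \<le> KK" unfolding KK_def using ma
    by (auto simp: max_def intro: order_trans[OF _ mult_le_mono])
  have hK: "h \<le> KK" using assms(5) mxle unfolding KK_def by linarith
  have k1le: "1 \<le> KK - h" using assms(5) mxle ma unfolding KK_def by linarith
  obtain F0 where F0: "F0 \<subseteq> S" "card F0 = h" "finite F0"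
    using obtain_subset_with_card_n[of h S] hK cS by auto
  have iC0: "injP C (S - F0)" by (rule corrF[OF F0(1,2)])
  have cSF: "card (S - F0) = KK - h" using F0 cS by (simp add: card_Diff_subset)
  have up: "card C \<le> q ^ (KK - h)"
  proof -
    have "card C \<le> q ^ card (S - F0)" unfolding q_def
      by (rule card_le_injP(1)[OF _ fc iC0]) (use fS cvC in auto)
    then show ?thesis using cSF by simp
  qed
  have lo: "q ^ KK \<le> card C * q ^ h"
  proof -
    have "q ^ KK \<le> q ^ (k1 * k2)" unfolding KK_def
      using q t(2,5) by (intro power_increasing mult_le_mono) auto
    also have "\<dots> \<le> card ?T" unfolding q_def by (rule K.tensor_card_lower[OF fc t(1) t(3) t(4) t(6)])
    also have "\<dots> \<le> card C * q ^ h" unfolding q_def by (rule K.card_kernel[OF fc lT finite_grid HcX t(8)])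
    finally show ?thesis .
  qed
  have cC: "card C = q ^ k" using assms(8) unfolding has_dim_def q_def .
  have "q ^ KK \<le> q ^ (k + h)" using lo cC by (simp add: power_add)
  then have kh1: "KK \<le> k + h" by (rule power_le_imp_le_exp[OF q])
  have "q ^ k \<le> q ^ (KK - h)" using up cC by simp
  then have kh2: "k \<le> KK - h" by (rule power_le_imp_le_exp[OF q])
  have kK: "k = KK - h" using kh1 kh2 hK by linarith
  have iCS: "injP C S" by (rule injP_mono[OF iC0]) blast
  have RC: "restrict_code R S C = rz R S ` C" unfolding restrict_code_def rz_def[abs_def] by (rule refl)
  have injr: "inj_on (rz R S) C"
  proof (rule inj_onI)
    fix x y assume xy: "x \<in> C" "y \<in> C" "rz R S x = rz R S y"
    show "x = y"
    proof (rule injPD[OF iCS xy(1,2)])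
      fix p assume "p \<in> S"
      then show "x p = y p" using fun_cong[OF xy(3), of p] unfolding rz_def by simp
    qed
  qed
  have lRC: "lin_code R S (rz R S ` C)" by (rule K.restrict_lin_code[OF lC])
  have dRC: "has_dim R (rz R S ` C) k" unfolding has_dim_def using card_image[OF injr] assms(8)
    unfolding has_dim_def by simp
  have len: "card S = m * n - card E'" unfolding S_def
    using card_Diff_subset[OF finite_subset[OF Esub finite_grid] Esub] card_grid by simp
  have part1: "weight R S r \<ge> h + 1" if r: "r \<in> rz R S ` C" "r \<noteq> (\<lambda>p. \<zero>\<^bsub>R\<^esub>)" for r
  proof (rule ccontr)
    assume "\<not> weight R S r \<ge> h + 1"
    then have wl: "card {p \<in> S. r p \<noteq> \<zero>\<^bsub>R\<^esub>} \<le> h" unfolding weight_def by simp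
    obtain c where c: "c \<in> C" "r = rz R S c" using r(1) by blast
    define Z where "Z = {p \<in> S. r p \<noteq> \<zero>\<^bsub>R\<^esub>}"
    have ZS: "Z \<subseteq> S" unfolding Z_def by blast
    have fZ: "finite Z" using ZS fS finite_subset by blast
    have "card (S - Z) = KK - card Z" using ZS fZ cS by (simp add: card_Diff_subset)
    then have "h - card Z \<le> card (S - Z)" using hK by linarith
    then obtain G where G: "G \<subseteq> S - Z" "card G = h - card Z" "finite G"
      by (rule obtain_subset_with_card_n)
    define F where "F = Z \<union> G"
    have FS: "F \<subseteq> S" unfolding F_def using ZS G(1) by blast
    have cF: "card F = h" unfolding F_def using G fZ wl unfolding Z_def
      by (subst card_Un_disjoint) auto
    have "injP C (S - F)" by (rule corrF[OF FS cF])
    moreover have "\<forall>p\<in>S - F. c p = \<zero>\<^bsub>R\<^esub>"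
    proof
      fix p assume p: "p \<in> S - F"
      then have "p \<notin> Z" unfolding F_def by blast
      then have "r p = \<zero>\<^bsub>R\<^esub>" using p unfolding Z_def by blast
      then show "c p = \<zero>\<^bsub>R\<^esub>" using p c(2) unfolding rz_def by simp
    qed
    ultimately have "c = (\<lambda>p. \<zero>\<^bsub>R\<^esub>)" using injPD[OF _ c(1) z0] by blast
    then have "r = (\<lambda>p. \<zero>\<^bsub>R\<^esub>)" using c(2) unfolding rz_def by auto
    then show False using r(2) by blast
  qed
  have part2: "\<exists>r\<in>rz R S ` C. r \<noteq> (\<lambda>p. \<zero>\<^bsub>R\<^esub>) \<and> weight R S r = h + 1"
  proof -
    obtain G where G: "G \<subseteq> S" "card G = k - 1" "finite G"
      using obtain_subset_with_card_n[of "k - 1" S] cS kK by auto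
    have ninj: "\<not> inj_on (rz R G) C"
    proof
      assume inj: "inj_on (rz R G) C"
      have "rz R G ` C \<subseteq> vecs R G" using cvC unfolding rz_def vecs_def by auto
      then have "card (rz R G ` C) \<le> card (vecs R G)"
        using card_vecs(2)[OF G(3) fc] by (simp add: card_mono)
      then have "card C \<le> q ^ (k - 1)" using card_image[OF inj] card_vecs(1)[OF G(3) fc] G(2)
        unfolding q_def by simp
      moreover have "q ^ (k - 1) < q ^ k" using q k1le kK by simp
      ultimately show False using cC by simp
    qed
    then obtain c1 c2 where cc: "c1 \<in> C" "c2 \<in> C" "rz R G c1 = rz R G c2" "c1 \<noteq> c2"
      unfolding inj_on_def by blast
    obtain d where d: "d \<in> C" "\<forall>p. (d p = \<zero>\<^bsub>R\<^esub> \<longleftrightarrow> c1 p = c2 p)"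
      using K.lin_code_diff[OF lC cc(1,2)] by blast
    define r where "r = rz R S d"
    have rin: "r \<in> rz R S ` C" unfolding r_def using d(1) by blast
    have rnz: "r \<noteq> (\<lambda>p. \<zero>\<^bsub>R\<^esub>)"
    proof
      assume "r = (\<lambda>p. \<zero>\<^bsub>R\<^esub>)"
      then have "\<forall>p\<in>S. d p = (\<lambda>p. \<zero>\<^bsub>R\<^esub>) p" unfolding r_def rz_def by (metis (full_types))
      then have "d = (\<lambda>p. \<zero>\<^bsub>R\<^esub>)" using injPD[OF iCS d(1) z0] by blast
      then have "\<forall>p. c1 p = c2 p" using d(2) by simp
      then show False using cc(4) by blast
    qed
    have "{p \<in> S. r p \<noteq> \<zero>\<^bsub>R\<^esub>} \<subseteq> S - G"
    proof
      fix p assume p: "p \<in> {p \<in> S. r p \<noteq> \<zero>\<^bsub>R\<^esub>}"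
      have "p \<notin> G"
      proof
        assume pG: "p \<in> G"
        then have "c1 p = c2 p" using fun_cong[OF cc(3), of p] unfolding rz_def by simp
        then have "d p = \<zero>\<^bsub>R\<^esub>" using d(2) by blast
        then show False using p unfolding r_def rz_def by auto
      qed
      then show "p \<in> S - G" using p by blast
    qed
    then have "weight R S r \<le> card (S - G)" unfolding weight_def using fS by (simp add: card_mono)
    also have "card (S - G) = KK - (k - 1)" using G cS by (simp add: card_Diff_subset)
    finally have "weight R S r \<le> h + 1" using kK k1le by linarith
    moreover have "weight R S r \<ge> h + 1" by (rule part1[OF rin rnz])
    ultimately show ?thesis using rin rnz by (intro bexI[of _ r]) auto
  qed
  have md: "min_dist_is R S (rz R S ` C) (h + 1)"
    unfolding min_dist_is_def using part1 part2 by blast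
  have "MDS_code R S (restrict_code R S C) (card S) k (h + 1)"
    unfolding MDS_code_def RC
  proof (intro conjI)
    show "lin_code R S (rz R S ` C)" by (rule lRC)
    show "finite S" by (rule fS)
    show "card S = card S" ..
    show "has_dim R (rz R S ` C) k" by (rule dRC)
    show "min_dist_is R S (rz R S ` C) (h + 1)" by (rule md)
    show "k \<le> card S" using kK cS by simp
    show "h + 1 = card S - k + 1" using kK cS hK by simp
  qed
  then show ?thesis using len unfolding S_def by simp
qed


end
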